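(* The tableau calculus $\mathbf{TAB}_{\mathbf{IB}}$ has the termination property: for every tableau of $\mathbf{TAB}_{\mathbf{IB}}$, every branch of it is finite.
   Context: Hybrid language: fix disjoint countably infinite sets $\mathbf{Prop}$ (propositional variables) and $\mathbf{Nom}$ (nominals). Formulas: $\varphi ::= p \mid i \mid \neg\varphi \mid \varphi\land\varphi \mid \Diamond\varphi \mid @_i\varphi$ with $p\in\mathbf{Prop}$, $i\in\mathbf{Nom}$; $\Box\varphi$ abbreviates $\neg\Diamond\neg\varphi$. Tableau calculus $\mathbf{TAB}_{\mathbf{IB}}$. A tableau is a well-founded tree whose nodes are formulas of the form $@_i\varphi$; its root is a formula $@_i\varphi$ (the root formula) where $i$ does not occur in $\varphi$. A branch is a maximal path; $\varphi\in\Theta$ means $\varphi$ occurs on branch $\Theta$. Each branch is extended by applying the rules below to its formulas as often as possible, except that no further formula is added to a branch once either (i) every new formula generated by applying any rule already occurs on the branch, or (ii) the branch is closed, i.e. contains $@_i\varphi$ and $@_i\neg\varphi$ for some formula $\varphi$ and nominal $i$. An accessibility formula is a formula $@_i\Diamond j$ added by rule $[\Diamond]$ (with $j$ the new nominal). Rules (premises already on the branch; conclusions added to it): [$\neg\neg$] from $@_i\neg\neg\varphi$ add $@_i\varphi$; [$\land$] from $@_i(\varphi\land\psi)$ add $@_i\varphi$ and $@_i\psi$; [$\neg\land$] from $@_i\neg(\varphi\land\psi)$ split the branch into one extended by $@_i\neg\varphi$ and one extended by $@_i\neg\psi$; [$\Diamond$] from $@_i\Diamond\varphi$, which is not an accessibility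 formula, add $@_i\Diamond j$ and $@_j\varphi$ where $j$ is a nominal not occurring on the branch; this rule is applied at most once per formula, and only if $i$ is a quasi-urfather on the branch (defined below); [$\neg\Diamond$] from $@_i\neg\Diamond\varphi$ and $@_i\Diamond j$ add $@_j\neg\varphi$; [$\Box_{sym}$] from $@_i\Box\varphi$ and $@_j\Diamond i$ add $@_j\varphi$; [$@$] from $@_i@_j\varphi$ add $@_j\varphi$; [$\neg@$] from $@_i\neg@_j\varphi$ add $@_j\neg\varphi$; [$Id$] from $@_i\varphi$, which is not an accessibility formula, and $@_i j$ add $@_j\varphi$; [$Ref$] for any nominal $i$ occurring on the branch add $@_i i$; ($\mathcal{I}$) for any nominal $i$ occurring on the branch add $@_i\neg\Diamond i$. Auxiliary notions for a branch $\Theta$. $@_i\varphi$ is a quasi-subformula of $@_j\psi$ if $\varphi$ is a subformula of $\psi$, or $\varphi=\neg\chi$ with $\chi$ a subformula of $\psi$. For a nominal $i$ occurring in $\Theta$, $T^\Theta(i)=\{\varphi \mid @_i\varphi\in\Theta$ and $@_i\varphi$ is a quasi-subformula of the root formula$\}$. Nominals $i,j$ are twins in $\Theta$ if $T^\Theta(i)=T^\Theta(j)$. $i\prec_\Theta j$ if $j$ was introduced by applying $[\Diamond]$ to a formula $@_i\Diamond\varphi$ (equivalently, the accessibility formula $@_i\Diamond j$ is in $\Theta$); $\prec_\Theta^*$ is its reflexive transitive closure. A nominal $i$ is a quasi-urfather on $\Theta$ if there are no twins $j\neq k$ with $j\prec_\Theta^* i$ and $k\prec_\Theta^* i$. *)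

theory Defs
  imports Main
begin

datatype fm = Pro nat | Nom nat | Neg fm | Con fm fm | Dia fm | At nat fm

abbreviation Box :: "fm \<Rightarrow> fm" where "Box \<phi> \<equiv> Neg (Dia (Neg \<phi>))"

text \<open>A tableau node is a satisfaction statement @_i phi, represented as the pair (i, phi).\<close>
type_synonym node = "nat \<times> fm"

fun nomsf :: "fm \<Rightarrow> nat set" where
  "nomsf (Pro p) = {}"
| "nomsf (Nom i) = {i}"
| "nomsf (Neg \<phi>) = nomsf \<phi>"
| "nomsf (Con \<phi> \<psi>) = nomsf \<phi> \<union> nomsf \<psi>"
| "nomsf (Dia \<phi>) = nomsf \<phi>"
| "nomsf (At i \<phi>) = insert i (nomsf \<phi>)"

definition noms_br :: "node set \<Rightarrow> nat set" where
  "noms_br S = (\<Union>(i, \<phi>)\<in>S. insert i (nomsf \<phi>))"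

fun subf :: "fm \<Rightarrow> fm set" where
  "subf (Pro p) = {Pro p}"
| "subf (Nom i) = {Nom i}"
| "subf (Neg \<phi>) = insert (Neg \<phi>) (subf \<phi>)"
| "subf (Con \<phi> \<psi>) = insert (Con \<phi> \<psi>) (subf \<phi> \<union> subf \<psi>)"
| "subf (Dia \<phi>) = insert (Dia \<phi>) (subf \<phi>)"
| "subf (At i \<phi>) = insert (At i \<phi>) (subf \<phi>)"

definition qsub :: "node \<Rightarrow> node \<Rightarrow> bool" where
  "qsub a r \<longleftrightarrow> snd a \<in> subf (snd r) \<or> (\<exists>\<chi>. snd a = Neg \<chi> \<and> \<chi> \<in> subf (snd r))"

definition closed :: "node set \<Rightarrow> bool" where
  "closed S \<longleftrightarrow> (\<exists>i \<phi>. (i, \<phi>) \<in> S \<and> (i, Neg \<phi>) \<in> S)"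

definition Tset :: "node \<Rightarrow> node set \<Rightarrow> nat \<Rightarrow> fm set" where
  "Tset r S i = {\<phi>. (i, \<phi>) \<in> S \<and> qsub (i, \<phi>) r}"

definition twins :: "node \<Rightarrow> node set \<Rightarrow> nat \<Rightarrow> nat \<Rightarrow> bool" where
  "twins r S j k \<longleftrightarrow> j \<in> noms_br S \<and> k \<in> noms_br S \<and> Tset r S j = Tset r S k"

definition prec :: "node set \<Rightarrow> (nat \<times> nat) set" where
  "prec A = {(i, j). (i, Dia (Nom j)) \<in> A}"

definition quasi_urfather :: "node \<Rightarrow> node set \<Rightarrow> node set \<Rightarrow> nat \<Rightarrow> bool" where
  "quasi_urfather r S A i \<longleftrightarrow>
     \<not> (\<exists>j k. j \<noteq> k \<and> twins r S j k \<and> (j, i) \<in> (prec A)\<^sup>* \<and> (k, i) \<in> (prec A)\<^sup>*)"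

text \<open>State of a branch during construction: its formulas, the accessibility formulas
  among them, and the formulas to which the Diamond rule has already been applied.\<close>
record bstate =
  br :: "node set"
  acc :: "node set"
  used :: "node set"

text \<open>All rules except [Diamond]: basic_rule S A C means that C is the set of formulas
  added to the branch (for the branching rule [not-and]: to the chosen child) by one
  rule instance whose premises are on the branch S, where A is the set of accessibility
  formulas of the branch.\<close>
inductive basic_rule :: "node set \<Rightarrow> node set \<Rightarrow> node set \<Rightarrow> bool" where
  NegNeg: "(i, Neg (Neg \<phi>)) \<in> S \<Longrightarrow> basic_rule S A {(i, \<phi>)}"
| Conj: "(i, Con \<phi> \<psi>) \<in> S \<Longrightarrow> basic_rule S A {(i, \<phi>), (i, \<psi>)}"
| NegConj1: "(i, Neg (Con \<phi> \<psi>)) \<in> S \<Longrightarrow> basic_rule S A {(i, Neg \<phi>)}"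
| NegConj2: "(i, Neg (Con \<phi> \<psi>)) \<in> S \<Longrightarrow> basic_rule S A {(i, Neg \<psi>)}"
| NegDia: "(i, Neg (Dia \<phi>)) \<in> S \<Longrightarrow> (i, Dia (Nom j)) \<in> S \<Longrightarrow> basic_rule S A {(j, Neg \<phi>)}"
| BoxSym: "(i, Box \<phi>) \<in> S \<Longrightarrow> (j, Dia (Nom i)) \<in> S \<Longrightarrow> basic_rule S A {(j, \<phi>)}"
| At: "(i, At j \<phi>) \<in> S \<Longrightarrow> basic_rule S A {(j, \<phi>)}"
| NegAt: "(i, Neg (At j \<phi>)) \<in> S \<Longrightarrow> basic_rule S A {(j, Neg \<phi>)}"
| Id: "(i, \<phi>) \<in> S \<Longrightarrow> (i, \<phi>) \<notin> A \<Longrightarrow> (i, Nom j) \<in> S \<Longrightarrow> basic_rule S A {(j, \<phi>)}"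
| Ref: "i \<in> noms_br S \<Longrightarrow> basic_rule S A {(i, Nom i)}"
| Irr: "i \<in> noms_br S \<Longrightarrow> basic_rule S A {(i, Neg (Dia (Nom i)))}"

definition tab_step :: "node \<Rightarrow> bstate \<Rightarrow> bstate \<Rightarrow> bool" where
  "tab_step r s s' \<longleftrightarrow> \<not> closed (br s) \<and>
     ((\<exists>C. basic_rule (br s) (acc s) C \<and> \<not> C \<subseteq> br s \<and>
           s' = \<lparr>br = br s \<union> C, acc = acc s, used = used s\<rparr>)
    \<or> (\<exists>i \<phi> j. (i, Dia \<phi>) \<in> br s \<and> (i, Dia \<phi>) \<notin> acc s \<and> (i, Dia \<phi>) \<notin> used s
           \<and> quasi_urfather r (br s) (acc s) i \<and> j \<notin> noms_br (br s)
           \<and> s' = \<lparr>br = br s \<union> {(i, Dia (Nom j)), (j, \<phi>)},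
                   acc = insert (i, Dia (Nom j)) (acc s),
                   used = insert (i, Dia \<phi>) (used s)\<rparr>))"

definition tab_init :: "node \<Rightarrow> bstate" where
  "tab_init r = \<lparr>br = {r}, acc = {}, used = {}\<rparr>"

end

theory Submission
  imports Defs
begin

lemma subf_refl: "\<phi> \<in> subf \<phi>"
  by (cases \<phi>) auto

lemma subf_trans: "\<psi> \<in> subf \<chi> \<Longrightarrow> subf \<psi> \<subseteq> subf \<chi>"
  by (induction \<chi>) auto

lemma finite_subf: "finite (subf \<phi>)"
  by (induction \<phi>) auto

lemma finite_nomsf: "finite (nomsf \<phi>)"
  by (induction \<phi>) auto

lemma noms_br_union: "noms_br (A \<union> B) = noms_br A \<union> noms_br B"
  unfolding noms_br_def by auto

lemma noms_br_mem: "(a, \<psi>) \<in> S \<Longrightarrow> insert a (nomsf \<psi>) \<subseteq> noms_br S"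
  unfolding noms_br_def by auto

lemma finite_noms_br: "finite S \<Longrightarrow> finite (noms_br S)"
  unfolding noms_br_def by (auto simp: finite_nomsf)

lemma noms_br_insert: "noms_br (insert (a, \<psi>) S) = insert a (nomsf \<psi>) \<union> noms_br S"
  unfolding noms_br_def by auto

lemma noms_br_empty: "noms_br {} = {}"
  unfolding noms_br_def by auto

lemma basic_noms: "basic_rule S A C \<Longrightarrow> noms_br C \<subseteq> noms_br S"
  by (induction rule: basic_rule.induct) (auto simp: noms_br_insert noms_br_empty dest!: noms_br_mem)

lemma basic_finite: "basic_rule S A C \<Longrightarrow> finite C"
  by (induction rule: basic_rule.induct) auto

definition QQ :: "fm \<Rightarrow> fm set" where
  "QQ \<phi> = subf \<phi> \<union> Neg ` subf \<phi>"

definition G0 :: "fm \<Rightarrow> nat set \<Rightarrow> fm set" where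
  "G0 \<phi> N = QQ \<phi> \<union> Nom ` N \<union> (\<lambda>k. Neg (Nom k)) ` N \<union> (\<lambda>k. Neg (Dia (Nom k))) ` N"

lemma sub_sub: "\<psi> \<in> subf \<chi> \<Longrightarrow> \<chi> \<in> subf \<phi> \<Longrightarrow> \<psi> \<in> subf \<phi>"
  using subf_trans by blast

lemma subf_Neg: "Neg \<psi> \<in> subf \<phi> \<Longrightarrow> \<psi> \<in> subf \<phi>"
  by (rule sub_sub[of _ "Neg \<psi>"]) (auto simp: subf_refl)

lemma subf_Dia: "Dia \<psi> \<in> subf \<phi> \<Longrightarrow> \<psi> \<in> subf \<phi>"
  by (rule sub_sub[of _ "Dia \<psi>"]) (auto simp: subf_refl)

lemma subf_Con: "Con \<psi>1 \<psi>2 \<in> subf \<phi> \<Longrightarrow> \<psi>1 \<in> subf \<phi> \<and> \<psi>2 \<in> subf \<phi>"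
  using sub_sub[of \<psi>1 "Con \<psi>1 \<psi>2"] sub_sub[of \<psi>2 "Con \<psi>1 \<psi>2"] by (auto simp: subf_refl)

lemma subf_At: "At j \<psi> \<in> subf \<phi> \<Longrightarrow> \<psi> \<in> subf \<phi>"
  by (rule sub_sub[of _ "At j \<psi>"]) (auto simp: subf_refl)

lemma basic_G0:
  assumes "basic_rule S A C"
    and G: "\<forall>a \<psi>. (a,\<psi>) \<in> S \<longrightarrow> (a,\<psi>) \<in> A \<or> \<psi> \<in> G0 \<phi> N"
    and AD: "\<forall>x\<in>A. \<exists>a b. x = (a, Dia (Nom b))"
    and N: "noms_br S \<subseteq> N"
  shows "\<forall>(a,\<psi>)\<in>C. \<psi> \<in> G0 \<phi> N"
  using assms
proof (induction rule: basic_rule.induct)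
  case (NegNeg i \<psi> S A)
  then have "Neg (Neg \<psi>) \<in> G0 \<phi> N" by fastforce
  then have "\<psi> \<in> subf \<phi>" by (auto simp: G0_def QQ_def dest!: subf_Neg)
  then show ?case by (simp add: G0_def QQ_def)
next
  case (Conj i \<psi>1 \<psi>2 S A)
  then have "Con \<psi>1 \<psi>2 \<in> G0 \<phi> N" by fastforce
  then show ?case by (auto simp: G0_def QQ_def dest!: subf_Neg subf_Dia subf_Con subf_At)
next
  case (NegConj1 i \<psi>1 \<psi>2 S A)
  then have "Neg (Con \<psi>1 \<psi>2) \<in> G0 \<phi> N" by fastforce
  then show ?case by (auto simp: G0_def QQ_def dest!: subf_Neg subf_Dia subf_Con subf_At)
next
  case (NegConj2 i \<psi>1 \<psi>2 S A)
  then have "Neg (Con \<psi>1 \<psi>2) \<in> G0 \<phi> N" by fastforce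
  then show ?case by (auto simp: G0_def QQ_def dest!: subf_Neg subf_Dia subf_Con subf_At)
next
  case (NegDia i \<psi> S j A)
  then have "Neg (Dia \<psi>) \<in> G0 \<phi> N" by fastforce
  then show ?case by (auto simp: G0_def QQ_def dest!: subf_Neg subf_Dia subf_Con subf_At)
next
  case (BoxSym i \<psi> S j A)
  then have "Box \<psi> \<in> G0 \<phi> N" by fastforce
  then show ?case by (auto simp: G0_def QQ_def dest!: subf_Neg subf_Dia subf_Con subf_At)
next
  case (At i j \<psi> S A)
  then have "At j \<psi> \<in> G0 \<phi> N" by fastforce
  then show ?case by (auto simp: G0_def QQ_def dest!: subf_Neg subf_Dia subf_Con subf_At)
next
  case (NegAt i j \<psi> S A)
  then have "Neg (At j \<psi>) \<in> G0 \<phi> N" by fastforce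
  then show ?case by (auto simp: G0_def QQ_def dest!: subf_Neg subf_Dia subf_Con subf_At)
next
  case (Id i \<psi> S A j)
  then show ?case by fastforce
next
  case (Ref i S A)
  then show ?case by (auto simp: G0_def)
next
  case (Irr i S A)
  then show ?case by (auto simp: G0_def)
qed

lemma rtr_old:
  assumes fresh: "\<forall>a b. (a,b) \<in> P \<longrightarrow> a \<noteq> j \<and> b \<noteq> j" and ij: "i \<noteq> j"
    and xk: "(x,k) \<in> (insert (i,j) P)\<^sup>*" and kj: "k \<noteq> j"
  shows "(x,k) \<in> P\<^sup>*"
proof -
  have "z \<noteq> j \<longrightarrow> (x,z) \<in> P\<^sup>*" if "(x,z) \<in> (insert (i,j) P)\<^sup>*" for z
    using that
  proof (induction rule: rtrancl_induct)
    case base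
    then show ?case by simp
  next
    case (step y z)
    show ?case
    proof
      assume "z \<noteq> j"
      with step.hyps(2) have yz: "(y,z) \<in> P" by auto
      with fresh have "y \<noteq> j" by auto
      with step.IH have "(x,y) \<in> P\<^sup>*" by simp
      with yz show "(x,z) \<in> P\<^sup>*" by simp
    qed
  qed
  with xk kj show ?thesis by blast
qed

lemma rtr_new:
  assumes fresh: "\<forall>a b. (a,b) \<in> P \<longrightarrow> a \<noteq> j \<and> b \<noteq> j" and ij: "i \<noteq> j"
  shows "(x,j) \<in> (insert (i,j) P)\<^sup>* \<longleftrightarrow> x = j \<or> (x,i) \<in> P\<^sup>*"
proof
  assume "(x,j) \<in> (insert (i,j) P)\<^sup>*"
  then show "x = j \<or> (x,i) \<in> P\<^sup>*"
  proof (cases rule: rtranclE)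
    case base
    then show ?thesis by simp
  next
    case (step y)
    then have "y = i" using fresh by auto
    with step(1) show ?thesis using rtr_old[OF fresh ij] ij by blast
  qed
next
  assume "x = j \<or> (x,i) \<in> P\<^sup>*"
  then show "(x,j) \<in> (insert (i,j) P)\<^sup>*"
  proof
    assume "(x,i) \<in> P\<^sup>*"
    then have "(x,i) \<in> (insert (i,j) P)\<^sup>*" by (rule rtrancl_mono[THEN subsetD, rotated]) auto
    then show ?thesis by (rule rtrancl_into_rtrancl) simp
  qed simp
qed

definition anc :: "node set \<Rightarrow> nat \<Rightarrow> nat set" where
  "anc A k = {x. (x,k) \<in> (prec A)\<^sup>*}"

definition Addr :: "nat \<Rightarrow> fm \<Rightarrow> (nat \<times> fm list) set" where
  "Addr i \<phi> = insert i (nomsf \<phi>) \<times> {xs. set xs \<subseteq> subf \<phi> \<and> length xs \<le> 2 ^ card (QQ \<phi>)}"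

definition Inv :: "nat \<Rightarrow> fm \<Rightarrow> bstate \<Rightarrow> bool" where
  "Inv i \<phi> s \<longleftrightarrow> finite (br s) \<and> acc s \<subseteq> br s \<and> (\<forall>x\<in>acc s. \<exists>a b. x = (a, Dia (Nom b))) \<and>
    (\<forall>a \<psi>. (a,\<psi>) \<in> br s \<longrightarrow> (a,\<psi>) \<in> acc s \<or> \<psi> \<in> G0 \<phi> (noms_br (br s))) \<and>
    (\<exists>addr. inj_on addr (noms_br (br s)) \<and>
      (\<forall>k \<in> noms_br (br s). addr k \<in> Addr i \<phi> \<and> length (snd (addr k)) < card (anc (acc s) k) \<and>
        (addr k = (k, []) \<or> (\<exists>p xs \<psi>. snd (addr k) = xs @ [\<psi>] \<and> (p, Dia (Nom k)) \<in> acc s \<and>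
            addr p = (fst (addr k), xs) \<and> (p, Dia \<psi>) \<in> used s))))"

lemma finite_QQ: "finite (QQ \<phi>)"
  by (simp add: QQ_def finite_subf)

lemma anc_sub:
  assumes "A \<subseteq> S" "(x,k) \<in> (prec A)\<^sup>*" "k \<in> noms_br S"
  shows "x \<in> noms_br S"
  using assms(2)
proof (cases rule: converse_rtranclE)
  case base
  then show ?thesis using assms by simp
next
  case (step y)
  then have "(x, Dia (Nom y)) \<in> S" using assms(1) by (auto simp: prec_def)
  then show ?thesis using noms_br_mem by blast
qed

lemma Inv_init: "Inv i \<phi> (tab_init (i, \<phi>))"
proof -
  have N: "noms_br {(i,\<phi>)} = insert i (nomsf \<phi>)" by (simp add: noms_br_insert noms_br_empty)
  have a: "anc {} k = {k}" for k by (auto simp: anc_def prec_def)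
  show ?thesis unfolding Inv_def tab_init_def
    apply (simp add: N a)
    apply (intro conjI)
     apply (simp add: G0_def QQ_def subf_refl)
    apply (rule exI[of _ "\<lambda>k. (k, [])"])
    apply (auto simp: inj_on_def Addr_def)
    done
qed

lemma step_grow: "tab_step r s s' \<Longrightarrow> br s \<subset> br s'"
  unfolding tab_step_def
proof (elim conjE disjE exE)
  fix C assume "basic_rule (br s) (acc s) C" "\<not> C \<subseteq> br s"
    "s' = \<lparr>br = br s \<union> C, acc = acc s, used = used s\<rparr>"
  then show "br s \<subset> br s'" by auto
next
  fix i \<phi> j assume j: "j \<notin> noms_br (br s)" and s': "s' = \<lparr>br = br s \<union> {(i, Dia (Nom j)), (j, \<phi>)},
                   acc = insert (i, Dia (Nom j)) (acc s),
                   used = insert (i, Dia \<phi>) (used s)\<rparr>"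
  have "(i, Dia (Nom j)) \<notin> br s" using j noms_br_mem[of i "Dia (Nom j)" "br s"] by auto
  then show "br s \<subset> br s'" using s' by auto
qed

lemma finite_Addr: "finite (Addr i \<phi>)"
  unfolding Addr_def by (intro finite_cartesian_product finite_lists_length_le) (auto simp: finite_nomsf finite_subf)

definition Hs :: "fm \<Rightarrow> nat set \<Rightarrow> fm set" where
  "Hs \<phi> N = QQ \<phi> \<union> (Nom ` N \<union> ((\<lambda>k. Neg (Nom k)) ` N \<union> ((\<lambda>k. Neg (Dia (Nom k))) ` N \<union> (\<lambda>k. Dia (Nom k)) ` N)))"

lemma card_Hs: "finite N \<Longrightarrow> card (Hs \<phi> N) \<le> card (QQ \<phi>) + 4 * card N"
proof -
  assume fN: "finite N"
  have "card (Hs \<phi> N) \<le> card (QQ \<phi>) + (card (Nom ` N) + (card ((\<lambda>k. Neg (Nom k)) ` N) + (card ((\<lambda>k. Neg (Dia (Nom k))) ` N) + card ((\<lambda>k. Dia (Nom k)) ` N))))"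
    unfolding Hs_def
    by (rule order_trans[OF card_Un_le] add_mono order_refl)+
  also have "\<dots> \<le> card (QQ \<phi>) + (card N + (card N + (card N + card N)))"
    by (intro add_mono order_refl card_image_le fN)
  finally show ?thesis by simp
qed

lemma Inv_card:
  assumes "Inv i \<phi> s"
  shows "card (br s) \<le> card (Addr i \<phi>) * (card (QQ \<phi>) + 4 * card (Addr i \<phi>))"
proof -
  let ?N = "noms_br (br s)"
  let ?K = "card (Addr i \<phi>)"
  from assms have fin: "finite (br s)" by (simp add: Inv_def)
  then have fN: "finite ?N" by (rule finite_noms_br)
  from assms obtain addr where inj: "inj_on addr ?N" and ad: "\<forall>k\<in>?N. addr k \<in> Addr i \<phi>"
    unfolding Inv_def by blast
  have cN: "card ?N \<le> ?K" using card_inj_on_le[OF inj _ finite_Addr] ad by blast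
  have sub: "br s \<subseteq> ?N \<times> Hs \<phi> ?N"
  proof
    fix x assume x: "x \<in> br s"
    obtain a \<psi> where xe: "x = (a, \<psi>)" by fastforce
    have aN: "insert a (nomsf \<psi>) \<subseteq> ?N" using noms_br_mem x xe by blast
    from assms x xe have "(a,\<psi>) \<in> acc s \<or> \<psi> \<in> G0 \<phi> ?N" by (simp add: Inv_def)
    moreover from assms have "\<forall>x\<in>acc s. \<exists>a b. x = (a, Dia (Nom b))" by (simp add: Inv_def)
    ultimately have "\<psi> \<in> Hs \<phi> ?N" using aN by (auto simp: G0_def Hs_def)
    then show "x \<in> ?N \<times> Hs \<phi> ?N" using xe aN by auto
  qed
  have fH: "finite (Hs \<phi> ?N)" using fN by (simp add: Hs_def finite_QQ)
  have "card (br s) \<le> card (?N \<times> Hs \<phi> ?N)" by (rule card_mono[OF _ sub]) (simp add: fN fH)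
  also have "\<dots> = card ?N * card (Hs \<phi> ?N)" by (simp add: card_cartesian_product)
  also have "\<dots> \<le> ?K * (card (QQ \<phi>) + 4 * ?K)"
    using cN card_Hs[OF fN, of \<phi>] by (intro mult_mono) auto
  finally show ?thesis .
qed

lemma Inv_basic:
  assumes I: "Inv i \<phi> s" and b: "basic_rule (br s) (acc s) C"
  shows "Inv i \<phi> \<lparr>br = br s \<union> C, acc = acc s, used = used s\<rparr>"
proof -
  have N: "noms_br (br s \<union> C) = noms_br (br s)" using basic_noms[OF b] by (auto simp: noms_br_union)
  have G: "\<forall>(a,\<psi>)\<in>C. \<psi> \<in> G0 \<phi> (noms_br (br s))"
    by (rule basic_G0[OF b]) (use I in \<open>auto simp: Inv_def\<close>)
  show ?thesis unfolding Inv_def bstate.select_convs N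
    using I G basic_finite[OF b] unfolding Inv_def by blast
qed

lemma Inv_dia:
  assumes I: "Inv i \<phi> s"
    and in0: "(i0, Dia \<psi>) \<in> br s" and nacc: "(i0, Dia \<psi>) \<notin> acc s" and nused: "(i0, Dia \<psi>) \<notin> used s"
    and qu: "quasi_urfather (i, \<phi>) (br s) (acc s) i0" and j: "j \<notin> noms_br (br s)"
  shows "Inv i \<phi> \<lparr>br = br s \<union> {(i0, Dia (Nom j)), (j, \<psi>)},
                   acc = insert (i0, Dia (Nom j)) (acc s),
                   used = insert (i0, Dia \<psi>) (used s)\<rparr>"
proof -
  let ?N = "noms_br (br s)"
  let ?s' = "\<lparr>br = br s \<union> {(i0, Dia (Nom j)), (j, \<psi>)},
                   acc = insert (i0, Dia (Nom j)) (acc s),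
                   used = insert (i0, Dia \<psi>) (used s)\<rparr>"
  let ?P = "prec (acc s)"
  have fin: "finite (br s)" and accbr: "acc s \<subseteq> br s" and accsh: "\<forall>x\<in>acc s. \<exists>a b. x = (a, Dia (Nom b))"
    and G: "\<forall>a \<psi>. (a,\<psi>) \<in> br s \<longrightarrow> (a,\<psi>) \<in> acc s \<or> \<psi> \<in> G0 \<phi> ?N"
    using I by (auto simp: Inv_def)
  from I obtain addr where inj: "inj_on addr ?N" and
    AD: "\<forall>k \<in> ?N. addr k \<in> Addr i \<phi> \<and> length (snd (addr k)) < card (anc (acc s) k) \<and>
        (addr k = (k, []) \<or> (\<exists>p xs \<psi>. snd (addr k) = xs @ [\<psi>] \<and> (p, Dia (Nom k)) \<in> acc s \<and>
            addr p = (fst (addr k), xs) \<and> (p, Dia \<psi>) \<in> used s))"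
    unfolding Inv_def by blast
  have i0N: "insert i0 (nomsf (Dia \<psi>)) \<subseteq> ?N" using noms_br_mem[OF in0] .
  have N': "noms_br (br ?s') = insert j ?N"
    using i0N by (auto simp: noms_br_union noms_br_insert noms_br_empty)
  have ij: "i0 \<noteq> j" using i0N j by auto
  have P': "prec (acc ?s') = insert (i0, j) ?P" by (auto simp: prec_def)
  have fresh: "\<forall>a b. (a,b) \<in> ?P \<longrightarrow> a \<noteq> j \<and> b \<noteq> j"
  proof (intro allI impI)
    fix a b assume "(a,b) \<in> ?P"
    then have "(a, Dia (Nom b)) \<in> br s" using accbr by (auto simp: prec_def)
    then have "insert a (nomsf (Dia (Nom b))) \<subseteq> ?N" by (rule noms_br_mem)
    then show "a \<noteq> j \<and> b \<noteq> j" using j by auto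
  qed
  have "Dia \<psi> \<in> G0 \<phi> ?N" using G in0 nacc by blast
  then have "Dia \<psi> \<in> subf \<phi>" by (auto simp: G0_def QQ_def)
  then have psub: "\<psi> \<in> subf \<phi>" by (rule subf_Dia)
  have fN: "finite ?N" using fin by (rule finite_noms_br)
  have ancN: "anc (acc s) k \<subseteq> ?N" if "k \<in> ?N" for k
    using anc_sub[OF accbr _ that] by (auto simp: anc_def)
  have ancfin: "finite (anc (acc s) k)" if "k \<in> ?N" for k
    using ancN[OF that] fN by (rule finite_subset)
  have bound: "card (anc (acc s) i0) \<le> 2 ^ card (QQ \<phi>)"
  proof -
    let ?T = "Tset (i, \<phi>) (br s)"
    have "inj_on ?T (anc (acc s) i0)"
    proof (rule inj_onI)
      fix x y assume x: "x \<in> anc (acc s) i0" and y: "y \<in> anc (acc s) i0" and T: "?T x = ?T y"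
      have "x \<in> ?N" "y \<in> ?N" using ancN[of i0] i0N x y by auto
      with T have "twins (i, \<phi>) (br s) x y" by (simp add: twins_def)
      with qu x y show "x = y" by (auto simp: quasi_urfather_def anc_def)
    qed
    moreover have "?T ` anc (acc s) i0 \<subseteq> Pow (QQ \<phi>)"
      by (auto simp: Tset_def qsub_def QQ_def)
    ultimately have "card (anc (acc s) i0) \<le> card (Pow (QQ \<phi>))"
      by (rule card_inj_on_le) (simp add: finite_QQ)
    then show ?thesis by (simp add: card_Pow finite_QQ)
  qed
  define addr' where "addr' = addr(j := (fst (addr i0), snd (addr i0) @ [\<psi>]))"
  have addr'_N: "addr' k = addr k" if "k \<in> ?N" for k using that j by (auto simp: addr'_def)
  have i0AD: "addr i0 \<in> Addr i \<phi>" "length (snd (addr i0)) < card (anc (acc s) i0)"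
    using AD i0N by auto
  have notin: "addr' j \<notin> addr ` ?N"
  proof
    assume "addr' j \<in> addr ` ?N"
    then obtain k where k: "k \<in> ?N" and ak: "addr k = (fst (addr i0), snd (addr i0) @ [\<psi>])"
      by (auto simp: addr'_def)
    from AD k ak obtain p xs \<psi>' where "snd (addr k) = xs @ [\<psi>']" "(p, Dia (Nom k)) \<in> acc s"
      "addr p = (fst (addr k), xs)" "(p, Dia \<psi>') \<in> used s" by auto
    then have xs: "xs = snd (addr i0)" "\<psi>' = \<psi>" and pacc: "(p, Dia (Nom k)) \<in> acc s"
      and ap: "addr p = addr i0" and pu: "(p, Dia \<psi>) \<in> used s" using ak by auto
    have "p \<in> ?N" using pacc accbr noms_br_mem by blast
    then have "p = i0" using inj ap i0N by (auto dest: inj_onD)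
    with pu nused show False by simp
  qed
  have inj': "inj_on addr' (insert j ?N)"
  proof -
    have "inj_on addr' ?N" using inj addr'_N by (simp add: inj_on_def)
    moreover have "addr' j \<notin> addr' ` (?N - {j})" using notin addr'_N by auto
    ultimately show ?thesis by simp
  qed
  have anc_old: "anc (acc ?s') k = anc (acc s) k" if "k \<in> ?N" for k
  proof -
    have kj: "k \<noteq> j" using that j by auto
    show ?thesis unfolding anc_def P'
      using rtr_old[OF fresh ij _ kj] rtrancl_mono[of ?P "insert (i0,j) ?P"] by auto
  qed
  have anc_new: "anc (acc ?s') j = insert j (anc (acc s) i0)"
    unfolding anc_def P' using rtr_new[OF fresh ij] by auto
  have jnot: "j \<notin> anc (acc s) i0" using ancN[of i0] i0N j by auto
  have card_new: "card (anc (acc ?s') j) = Suc (card (anc (acc s) i0))"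
    unfolding anc_new using ancfin[of i0] i0N jnot by simp
  have AD': "\<forall>k \<in> insert j ?N. addr' k \<in> Addr i \<phi> \<and> length (snd (addr' k)) < card (anc (acc ?s') k) \<and>
        (addr' k = (k, []) \<or> (\<exists>p xs \<psi>. snd (addr' k) = xs @ [\<psi>] \<and> (p, Dia (Nom k)) \<in> acc ?s' \<and>
            addr' p = (fst (addr' k), xs) \<and> (p, Dia \<psi>) \<in> used ?s'))"
  proof
    fix k assume "k \<in> insert j ?N"
    then consider "k = j" | "k \<in> ?N" by auto
    then show "addr' k \<in> Addr i \<phi> \<and> length (snd (addr' k)) < card (anc (acc ?s') k) \<and>
        (addr' k = (k, []) \<or> (\<exists>p xs \<psi>. snd (addr' k) = xs @ [\<psi>] \<and> (p, Dia (Nom k)) \<in> acc ?s' \<and>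
            addr' p = (fst (addr' k), xs) \<and> (p, Dia \<psi>) \<in> used ?s'))"
    proof cases
      case 1
      have a1: "addr' j \<in> Addr i \<phi>"
        using i0AD bound psub by (auto simp: addr'_def Addr_def)
      have a2: "length (snd (addr' j)) < card (anc (acc ?s') j)"
        using i0AD card_new by (simp add: addr'_def)
      have a3: "addr' i0 = (fst (addr' j), snd (addr i0))" using ij by (simp add: addr'_def)
      show ?thesis using 1 a1 a2 a3 by (auto simp: addr'_def)
    next
      case 2
      have kj: "k \<noteq> j" using 2 j by auto
      from AD 2 have "addr k \<in> Addr i \<phi> \<and> length (snd (addr k)) < card (anc (acc s) k) \<and>
        (addr k = (k, []) \<or> (\<exists>p xs \<psi>. snd (addr k) = xs @ [\<psi>] \<and> (p, Dia (Nom k)) \<in> acc s \<and>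
            addr p = (fst (addr k), xs) \<and> (p, Dia \<psi>) \<in> used s))" by blast
      moreover have "addr' p = addr p" if "(p, Dia (Nom k)) \<in> acc s" for p
        using that accbr noms_br_mem addr'_N by blast
      ultimately show ?thesis using addr'_N[OF 2] anc_old[OF 2] by fastforce
    qed
  qed
  have G': "\<forall>a \<chi>. (a,\<chi>) \<in> br ?s' \<longrightarrow> (a,\<chi>) \<in> acc ?s' \<or> \<chi> \<in> G0 \<phi> (insert j ?N)"
  proof (intro allI impI)
    fix a \<chi> assume "(a,\<chi>) \<in> br ?s'"
    then consider "(a,\<chi>) \<in> br s" | "(a,\<chi>) = (i0, Dia (Nom j))" | "(a,\<chi>) = (j, \<psi>)" by auto
    then show "(a,\<chi>) \<in> acc ?s' \<or> \<chi> \<in> G0 \<phi> (insert j ?N)"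
    proof cases
      case 1
      then show ?thesis using G by (auto simp: G0_def)
    next
      case 2
      then show ?thesis by simp
    next
      case 3
      then show ?thesis using psub by (simp add: G0_def QQ_def)
    qed
  qed
  show ?thesis unfolding Inv_def N'
    using fin accbr accsh G' inj' AD' by (simp only: bstate.select_convs) auto
qed

lemma Inv_step: "Inv i \<phi> s \<Longrightarrow> tab_step (i, \<phi>) s s' \<Longrightarrow> Inv i \<phi> s'"
  unfolding tab_step_def using Inv_basic Inv_dia by auto

theorem theorem3:
  fixes i :: nat and \<phi> :: fm
  assumes "i \<notin> nomsf \<phi>"
  shows "\<not> (\<exists>f. f 0 = tab_init (i, \<phi>) \<and> (\<forall>n. tab_step (i, \<phi>) (f n) (f (Suc n))))"
proof
  assume "\<exists>f. f 0 = tab_init (i, \<phi>) \<and> (\<forall>n. tab_step (i, \<phi>) (f n) (f (Suc n)))"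
  then obtain f where f0: "f 0 = tab_init (i, \<phi>)" and fs: "\<forall>n. tab_step (i, \<phi>) (f n) (f (Suc n))" by blast
  have I: "Inv i \<phi> (f n)" for n
    by (induction n) (use f0 fs Inv_init Inv_step in auto)
  have C: "n \<le> card (br (f n))" for n
  proof (induction n)
    case (Suc n)
    have "br (f n) \<subset> br (f (Suc n))" using fs step_grow by blast
    moreover have "finite (br (f (Suc n)))" using I by (simp add: Inv_def)
    ultimately have "card (br (f n)) < card (br (f (Suc n)))" by (rule psubset_card_mono[rotated])
    with Suc show ?case by simp
  qed simp
  define M where "M = card (Addr i \<phi>) * (card (QQ \<phi>) + 4 * card (Addr i \<phi>))"
  have "Suc M \<le> card (br (f (Suc M)))" by (rule C)
  moreover have "card (br (f (Suc M))) \<le> M" unfolding M_def by (rule Inv_card[OF I])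
  ultimately show False by simp
qed

end
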